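(* Let $\succcurlyeq$ be a preference relation on the set $\mathcal{B}$ of bets over a propositional language $\mathcal{L}$. The following are equivalent: (1) $\succcurlyeq$ satisfies Non-Triviality, Objective Expected Utility and Equivalence; (2) $\succcurlyeq$ is represented by a subjective model of uncertainty $(\Omega,t,\lambda)$ with $t$ exact and $\lambda$ additive; (3) $\succcurlyeq$ is represented by a subjective model of uncertainty $(\Omega',t',\lambda')$ with $t'$ sound.
   Context: Let $\mathbb{P}$ be a set of propositional variables containing two distinguished propositions $\mathbf{T}$ and $\mathbf{F}$, and $\mathcal{L}$ the language generated from $\mathbb{P}$ by $\neg,\land,\lor$. Write $\phi\implies\psi$ if $\psi$ can be deduced from $\phi$ in classical propositional logic (with $\mathbf{T}$ read as true and $\mathbf{F}$ as false), and $\phi\iff\psi$ if $\phi\implies\psi$ and $\psi\implies\phi$. A bet is a finitely supported $b:\mathcal{L}\to[0,1]$ with $\sum_\phi b(\phi)=1$; $b_\phi$ is the bet with $b_\phi(\phi)=1$. The set $\mathcal{B}$ of bets is a mixture space under pointwise mixtures; $\succcurlyeq$ is a relation on $\mathcal{B}$ with parts $\sim,\succ$. A truth valuation on a set $\Omega$ is $t:\mathcal{L}\to 2^\Omega$ with $t(\mathbf{T})=\Omega$, $t(\mathbf{F})=\emptyset$. It is exact if $\phi\iff\psi$ implies $t(\phi)=t(\psi)$; monotone if $\phi\implies\psi$ implies $t(\phi)\subseteq t(\psi)$; symmetric if $t(\neg\phi)=\Omega\setminus t(\phi)$; $\land$-distributive if $t(\phi\land\psi)=t(\phi)\cap t(\psi)$;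 sound if it is exact, monotone, symmetric and $\land$-distributive. A likelihood appraisal on a field $\Sigma\subseteq 2^\Omega$ is $\lambda:\Sigma\to[0,1]$ with $\lambda(\emptyset)=0,\lambda(\Omega)=1$ (no other condition); it is additive if finitely additive on disjoint sets. A subjective model of uncertainty $(\Omega,t,\lambda)$ has $t$ a truth valuation and $\lambda$ a likelihood appraisal on a field containing $t(\mathcal{L})$; it represents $\succcurlyeq$ if $b\succcurlyeq b'$ iff $\sum_\phi b(\phi)\lambda(t(\phi))\ge\sum_\phi b'(\phi)\lambda(t(\phi))$. Axioms: Non-Triviality: $b_{\mathbf{T}}\succcurlyeq b_\phi\succcurlyeq b_{\mathbf{F}}$ for all $\phi$ and $b_{\mathbf{T}}\succ b_{\mathbf{F}}$. Objective Expected Utility: $\succcurlyeq$ is complete, transitive, Archimedean and satisfies Independence. Equivalence: if $\psi\iff\phi$ then $b_\psi\sim b_\phi$. *)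

theory Defs
  imports "HOL-Analysis.Analysis"
begin

datatype 'p form = Atom 'p | Neg "'p form" | Conj "'p form" "'p form" | Disj "'p form" "'p form"

primrec eval :: "('p \<Rightarrow> bool) \<Rightarrow> 'p form \<Rightarrow> bool" where
  "eval v (Atom p) = v p"
| "eval v (Neg a) = (\<not> eval v a)"
| "eval v (Conj a b) = (eval v a \<and> eval v b)"
| "eval v (Disj a b) = (eval v a \<or> eval v b)"

text \<open>Classical consequence with the proposition TT read as true and FF as false
  (semantic consequence; equals derivability by soundness and completeness).\<close>
definition admissible :: "'p \<Rightarrow> 'p \<Rightarrow> ('p \<Rightarrow> bool) \<Rightarrow> bool" where
  "admissible TT FF v \<longleftrightarrow> v TT \<and> \<not> v FF"

definition entails :: "'p \<Rightarrow> 'p \<Rightarrow> 'p form \<Rightarrow> 'p form \<Rightarrow> bool" where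
  "entails TT FF a b \<longleftrightarrow> (\<forall>v. admissible TT FF v \<longrightarrow> eval v a \<longrightarrow> eval v b)"

definition equivf :: "'p \<Rightarrow> 'p \<Rightarrow> 'p form \<Rightarrow> 'p form \<Rightarrow> bool" where
  "equivf TT FF a b \<longleftrightarrow> entails TT FF a b \<and> entails TT FF b a"

definition supp :: "('p form \<Rightarrow> real) \<Rightarrow> 'p form set" where
  "supp b = {a. b a \<noteq> 0}"

definition is_bet :: "('p form \<Rightarrow> real) \<Rightarrow> bool" where
  "is_bet b \<longleftrightarrow> finite (supp b) \<and> (\<forall>a. 0 \<le> b a \<and> b a \<le> 1) \<and> sum b (supp b) = 1"

definition bets :: "('p form \<Rightarrow> real) set" where
  "bets = {b. is_bet b}"

definition bet_on :: "'p form \<Rightarrow> ('p form \<Rightarrow> real)" where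
  "bet_on a = (\<lambda>c. if c = a then 1 else 0)"

definition mix :: "real \<Rightarrow> ('p form \<Rightarrow> real) \<Rightarrow> ('p form \<Rightarrow> real) \<Rightarrow> ('p form \<Rightarrow> real)" where
  "mix \<alpha> b b' = (\<lambda>a. \<alpha> * b a + (1 - \<alpha>) * b' a)"

type_synonym 'p pref = "('p form \<Rightarrow> real) \<Rightarrow> ('p form \<Rightarrow> real) \<Rightarrow> bool"

definition strict :: "'p pref \<Rightarrow> ('p form \<Rightarrow> real) \<Rightarrow> ('p form \<Rightarrow> real) \<Rightarrow> bool" where
  "strict R b b' \<longleftrightarrow> R b b' \<and> \<not> R b' b"

definition indiff :: "'p pref \<Rightarrow> ('p form \<Rightarrow> real) \<Rightarrow> ('p form \<Rightarrow> real) \<Rightarrow> bool" where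
  "indiff R b b' \<longleftrightarrow> R b b' \<and> R b' b"

definition non_triviality :: "'p \<Rightarrow> 'p \<Rightarrow> 'p pref \<Rightarrow> bool" where
  "non_triviality TT FF R \<longleftrightarrow>
     (\<forall>a. R (bet_on (Atom TT)) (bet_on a) \<and> R (bet_on a) (bet_on (Atom FF)))
     \<and> strict R (bet_on (Atom TT)) (bet_on (Atom FF))"

definition complete_pref :: "'p pref \<Rightarrow> bool" where
  "complete_pref R \<longleftrightarrow> (\<forall>b\<in>bets. \<forall>b'\<in>bets. R b b' \<or> R b' b)"

definition transitive_pref :: "'p pref \<Rightarrow> bool" where
  "transitive_pref R \<longleftrightarrow>
     (\<forall>b\<in>bets. \<forall>b'\<in>bets. \<forall>b''\<in>bets. R b b' \<longrightarrow> R b' b'' \<longrightarrow> R b b'')"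

definition archimedean_pref :: "'p pref \<Rightarrow> bool" where
  "archimedean_pref R \<longleftrightarrow>
     (\<forall>b\<in>bets. \<forall>b'\<in>bets. \<forall>b''\<in>bets. strict R b b' \<longrightarrow> strict R b' b'' \<longrightarrow>
        (\<exists>\<alpha>\<in>{0<..<1}. \<exists>\<beta>\<in>{0<..<1}.
           strict R (mix \<alpha> b b'') b' \<and> strict R b' (mix \<beta> b b'')))"

definition independence_pref :: "'p pref \<Rightarrow> bool" where
  "independence_pref R \<longleftrightarrow>
     (\<forall>b\<in>bets. \<forall>b'\<in>bets. \<forall>b''\<in>bets. \<forall>\<alpha>\<in>{0<..<1}.
        R b b' \<longleftrightarrow> R (mix \<alpha> b b'') (mix \<alpha> b' b''))"

definition objective_expected_utility :: "'p pref \<Rightarrow> bool" where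
  "objective_expected_utility R \<longleftrightarrow>
     complete_pref R \<and> transitive_pref R \<and> archimedean_pref R \<and> independence_pref R"

definition equivalence_axiom :: "'p \<Rightarrow> 'p \<Rightarrow> 'p pref \<Rightarrow> bool" where
  "equivalence_axiom TT FF R \<longleftrightarrow>
     (\<forall>a c. equivf TT FF c a \<longrightarrow> indiff R (bet_on c) (bet_on a))"

definition truth_valuation :: "'p \<Rightarrow> 'p \<Rightarrow> 'w set \<Rightarrow> ('p form \<Rightarrow> 'w set) \<Rightarrow> bool" where
  "truth_valuation TT FF \<Omega> t \<longleftrightarrow>
     (\<forall>a. t a \<subseteq> \<Omega>) \<and> t (Atom TT) = \<Omega> \<and> t (Atom FF) = {}"

definition exact_tv :: "'p \<Rightarrow> 'p \<Rightarrow> ('p form \<Rightarrow> 'w set) \<Rightarrow> bool" where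
  "exact_tv TT FF t \<longleftrightarrow> (\<forall>a c. equivf TT FF a c \<longrightarrow> t a = t c)"

definition monotone_tv :: "'p \<Rightarrow> 'p \<Rightarrow> ('p form \<Rightarrow> 'w set) \<Rightarrow> bool" where
  "monotone_tv TT FF t \<longleftrightarrow> (\<forall>a c. entails TT FF a c \<longrightarrow> t a \<subseteq> t c)"

definition symmetric_tv :: "'w set \<Rightarrow> ('p form \<Rightarrow> 'w set) \<Rightarrow> bool" where
  "symmetric_tv \<Omega> t \<longleftrightarrow> (\<forall>a. t (Neg a) = \<Omega> - t a)"

definition conj_distributive_tv :: "('p form \<Rightarrow> 'w set) \<Rightarrow> bool" where
  "conj_distributive_tv t \<longleftrightarrow> (\<forall>a c. t (Conj a c) = t a \<inter> t c)"

definition sound_tv :: "'p \<Rightarrow> 'p \<Rightarrow> 'w set \<Rightarrow> ('p form \<Rightarrow> 'w set) \<Rightarrow> bool" where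
  "sound_tv TT FF \<Omega> t \<longleftrightarrow>
     exact_tv TT FF t \<and> monotone_tv TT FF t \<and> symmetric_tv \<Omega> t \<and> conj_distributive_tv t"

definition likelihood_appraisal :: "'w set \<Rightarrow> 'w set set \<Rightarrow> ('w set \<Rightarrow> real) \<Rightarrow> bool" where
  "likelihood_appraisal \<Omega> \<Sigma> lam \<longleftrightarrow>
     algebra \<Omega> \<Sigma> \<and> (\<forall>A\<in>\<Sigma>. 0 \<le> lam A \<and> lam A \<le> 1) \<and> lam {} = 0 \<and> lam \<Omega> = 1"

definition additive_la :: "'w set set \<Rightarrow> ('w set \<Rightarrow> real) \<Rightarrow> bool" where
  "additive_la \<Sigma> lam \<longleftrightarrow>
     (\<forall>A\<in>\<Sigma>. \<forall>B\<in>\<Sigma>. A \<inter> B = {} \<longrightarrow> lam (A \<union> B) = lam A + lam B)"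

definition subjective_model :: "'p \<Rightarrow> 'p \<Rightarrow> 'w set \<Rightarrow> ('p form \<Rightarrow> 'w set) \<Rightarrow> 'w set set \<Rightarrow> ('w set \<Rightarrow> real) \<Rightarrow> bool" where
  "subjective_model TT FF \<Omega> t \<Sigma> lam \<longleftrightarrow>
     truth_valuation TT FF \<Omega> t \<and> likelihood_appraisal \<Omega> \<Sigma> lam \<and> range t \<subseteq> \<Sigma>"

definition value_of :: "('p form \<Rightarrow> 'w set) \<Rightarrow> ('w set \<Rightarrow> real) \<Rightarrow> ('p form \<Rightarrow> real) \<Rightarrow> real" where
  "value_of t lam b = (\<Sum>a\<in>supp b. b a * lam (t a))"

definition represents :: "('p form \<Rightarrow> 'w set) \<Rightarrow> ('w set \<Rightarrow> real) \<Rightarrow> 'p pref \<Rightarrow> bool" where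
  "represents t lam R \<longleftrightarrow>
     (\<forall>b\<in>bets. \<forall>b'\<in>bets. R b b' \<longleftrightarrow> value_of t lam b \<ge> value_of t lam b')"

end

theory Submission
  imports Defs
begin

definition val :: "('p form \<Rightarrow> real) \<Rightarrow> ('p form \<Rightarrow> real) \<Rightarrow> real" where
  "val u b = (\<Sum>a\<in>supp b. b a * u a)"

lemma value_of_val: "value_of t lam b = val (\<lambda>a. lam (t a)) b"
  by (simp add: value_of_def val_def)

lemma betD:
  assumes "is_bet b"
  shows "finite (supp b)" "0 \<le> b a" "b a \<le> 1" "sum b (supp b) = 1"
  using assms unfolding is_bet_def by blast+

lemma sum_supp:
  assumes "finite S" "supp b \<subseteq> S" shows "sum b S = sum b (supp b)"
  by (rule sum.mono_neutral_right) (use assms in \<open>auto simp: supp_def\<close>)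

lemma val_superset:
  assumes "finite S" "supp b \<subseteq> S" shows "val u b = (\<Sum>a\<in>S. b a * u a)"
  unfolding val_def
  by (rule sum.mono_neutral_left) (use assms in \<open>auto simp: supp_def\<close>)

lemma supp_mix: "supp (mix \<alpha> b b') \<subseteq> supp b \<union> supp b'"
  by (auto simp: supp_def mix_def)

lemma bet_mix:
  assumes "is_bet b" "is_bet b'" "0 \<le> \<alpha>" "\<alpha> \<le> 1"
  shows "is_bet (mix \<alpha> b b')"
proof -
  let ?S = "supp b \<union> supp b'"
  have fS: "finite ?S" using betD(1)[OF assms(1)] betD(1)[OF assms(2)] by simp
  have fin: "finite (supp (mix \<alpha> b b'))" by (rule finite_subset[OF supp_mix fS])
  have bnd: "0 \<le> mix \<alpha> b b' a \<and> mix \<alpha> b b' a \<le> 1" for a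
  proof -
    have "0 \<le> b a" "b a \<le> 1" "0 \<le> b' a" "b' a \<le> 1" using betD(2,3)[OF assms(1)] betD(2,3)[OF assms(2)] by auto
    moreover have "\<alpha> * b a \<le> \<alpha>" "(1 - \<alpha>) * b' a \<le> 1 - \<alpha>"
      using assms calculation by (simp_all add: mult_left_le)
    moreover have "0 \<le> \<alpha> * b a" "0 \<le> (1 - \<alpha>) * b' a" using assms calculation by simp_all
    moreover have "mix \<alpha> b b' a = \<alpha> * b a + (1 - \<alpha>) * b' a" by (simp add: mix_def)
    ultimately show ?thesis by linarith
  qed
  have "sum (mix \<alpha> b b') (supp (mix \<alpha> b b')) = sum (mix \<alpha> b b') ?S"
    using sum_supp[OF fS supp_mix] by simp
  also have "\<dots> = \<alpha> * sum b ?S + (1 - \<alpha>) * sum b' ?S"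
    by (simp add: mix_def sum.distrib sum_distrib_left)
  also have "sum b ?S = 1" using sum_supp[OF fS, of b] betD(4)[OF assms(1)] by simp
  also have "sum b' ?S = 1" using sum_supp[OF fS, of b'] betD(4)[OF assms(2)] by simp
  finally show ?thesis using fin bnd unfolding is_bet_def by simp
qed

lemma val_mix:
  assumes "is_bet b" "is_bet b'"
  shows "val u (mix \<alpha> b b') = \<alpha> * val u b + (1 - \<alpha>) * val u b'"
proof -
  let ?S = "supp b \<union> supp b'"
  have fS: "finite ?S" using betD(1)[OF assms(1)] betD(1)[OF assms(2)] by simp
  have "val u (mix \<alpha> b b') = (\<Sum>a\<in>?S. mix \<alpha> b b' a * u a)"
    using val_superset[OF fS supp_mix] .
  also have "\<dots> = \<alpha> * (\<Sum>a\<in>?S. b a * u a) + (1 - \<alpha>) * (\<Sum>a\<in>?S. b' a * u a)"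
    by (simp add: mix_def sum.distrib sum_distrib_left distrib_right mult.assoc)
  also have "\<dots> = \<alpha> * val u b + (1 - \<alpha>) * val u b'"
    using val_superset[OF fS, of b u] val_superset[OF fS, of b' u] by auto
  finally show ?thesis .
qed

lemma supp_bet_on: "supp (bet_on a) = {a}"
  by (auto simp: supp_def bet_on_def)

lemma bet_on_bet: "is_bet (bet_on a)"
  unfolding is_bet_def supp_bet_on by (simp add: bet_on_def)

lemma bet_on_bets: "bet_on a \<in> bets"
  using bet_on_bet by (simp add: bets_def)

lemma val_bet_on: "val u (bet_on a) = u a"
  unfolding val_def supp_bet_on by (simp add: bet_on_def)

lemma val_bounds:
  assumes "is_bet b" "\<And>a. 0 \<le> u a \<and> u a \<le> 1"
  shows "0 \<le> val u b \<and> val u b \<le> 1"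
proof -
  have "0 \<le> val u b" unfolding val_def
    using assms betD(2)[OF assms(1)] by (intro sum_nonneg mult_nonneg_nonneg) auto
  moreover have "val u b \<le> (\<Sum>a\<in>supp b. b a * 1)" unfolding val_def
  proof (rule sum_mono)
    fix a show "b a * u a \<le> b a * 1"
      using assms(2)[of a] betD(2)[OF assms(1)] by (intro mult_left_mono) auto
  qed
  moreover have "(\<Sum>a\<in>supp b. b a * 1) = 1" using betD(4)[OF assms(1)] by simp
  ultimately show ?thesis by linarith
qed

lemma bets_mix: "b \<in> bets \<Longrightarrow> b' \<in> bets \<Longrightarrow> 0 \<le> \<alpha> \<Longrightarrow> \<alpha> \<le> 1 \<Longrightarrow> mix \<alpha> b b' \<in> bets"
  using bet_mix by (simp add: bets_def)

lemma rep_oeu: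
  fixes R :: "'p pref" and u :: "'p form \<Rightarrow> real"
  assumes rep: "\<And>b b'. b \<in> bets \<Longrightarrow> b' \<in> bets \<Longrightarrow> R b b' \<longleftrightarrow> val u b' \<le> val u b"
  shows "objective_expected_utility R"
proof -
  have V: "val u (mix a b b') = a * val u b + (1 - a) * val u b'" if "b \<in> bets" "b' \<in> bets" for a b b'
    using val_mix that by (simp add: bets_def)
  have st: "strict R b b' \<longleftrightarrow> val u b' < val u b" if "b \<in> bets" "b' \<in> bets" for b b'
    using rep[OF that] rep[OF that(2,1)] by (auto simp: strict_def)
  have c: "complete_pref R" unfolding complete_pref_def using rep by force
  have t: "transitive_pref R" unfolding transitive_pref_def using rep by force
  have i: "independence_pref R" unfolding independence_pref_def
  proof (intro ballI)
    fix b b' b'' :: "'p form \<Rightarrow> real" and a :: real assume bb: "b \<in> bets" "b' \<in> bets" "b'' \<in> bets" and a: "a \<in> {0<..<1::real}"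
    have m: "mix a b b'' \<in> bets" "mix a b' b'' \<in> bets" using bb a by (simp_all add: bets_mix)
    have "R (mix a b b'') (mix a b' b'') \<longleftrightarrow> a * val u b' + (1 - a) * val u b'' \<le> a * val u b + (1 - a) * val u b''"
      using rep[OF m] V bb by simp
    also have "\<dots> \<longleftrightarrow> val u b' \<le> val u b" using a by simp
    finally show "R b b' \<longleftrightarrow> R (mix a b b'') (mix a b' b'')" using rep bb by simp
  qed
  have ar: "archimedean_pref R" unfolding archimedean_pref_def
  proof (intro ballI impI)
    fix b b' b'' :: "'p form \<Rightarrow> real" assume bb: "b \<in> bets" "b' \<in> bets" "b'' \<in> bets"
      and s1: "strict R b b'" and s2: "strict R b' b''"
    define d where "d = val u b - val u b''"
    define e where "e = val u b' - val u b''"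
    have e0: "0 < e" "e < d" using st bb s1 s2 by (auto simp: d_def e_def)
    define a where "a = e / (2 * d)"
    define c where "c = (1 + e / d) / 2"
    have ed: "e / d < 1" "0 < e / d" using e0 by auto
    have a01: "a \<in> {0<..<1}" using e0 ed by (auto simp: a_def)
    have c01: "c \<in> {0<..<1}" using ed by (auto simp: c_def)
    have ad: "a * d = e / 2" using e0 by (simp add: a_def)
    have cd: "c * d = (d + e) / 2" using e0 by (simp add: c_def field_simps)
    have m1: "mix a b b'' \<in> bets" "mix c b b'' \<in> bets" using bb a01 c01 by (simp_all add: bets_mix)
    have "val u (mix a b b'') = val u b'' + a * d" using V bb by (simp add: d_def algebra_simps)
    hence "val u (mix a b b'') = val u b'' + e / 2" using ad by simp
    hence "val u (mix a b b'') < val u b'" using e0(1) unfolding e_def by (simp add: field_simps)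
    hence "strict R b' (mix a b b'')" using st m1 bb by simp
    moreover have "val u (mix c b b'') = val u b'' + c * d" using V bb by (simp add: d_def algebra_simps)
    hence "val u (mix c b b'') = val u b'' + (d + e) / 2" using cd by simp
    hence "val u b' < val u (mix c b b'')" using e0(2) unfolding e_def by (simp add: field_simps)
    hence "strict R (mix c b b'') b'" using st m1 bb by simp
    ultimately show "\<exists>\<alpha>\<in>{0<..<1}. \<exists>\<beta>\<in>{0<..<1}. strict R (mix \<alpha> b b'') b' \<and> strict R b' (mix \<beta> b b'')"
      using a01 c01 by (intro bexI[of _ c] bexI[of _ a]) auto
  qed
  show ?thesis using c t i ar by (simp add: objective_expected_utility_def)
qed

lemma model_axioms:
  assumes sm: "subjective_model TT FF \<Omega> t \<Sigma> lam" and ex: "exact_tv TT FF t"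
    and rep: "represents t lam R"
  shows "non_triviality TT FF R \<and> objective_expected_utility R \<and> equivalence_axiom TT FF R"
proof -
  let ?u = "\<lambda>a. lam (t a)"
  have rep': "R b b' \<longleftrightarrow> val ?u b' \<le> val ?u b" if "b \<in> bets" "b' \<in> bets" for b b'
    using rep that by (simp add: represents_def value_of_val)
  have tv: "truth_valuation TT FF \<Omega> t" and la: "likelihood_appraisal \<Omega> \<Sigma> lam" and rt: "range t \<subseteq> \<Sigma>"
    using sm by (simp_all add: subjective_model_def)
  have ub: "0 \<le> ?u a \<and> ?u a \<le> 1" for a using la rt by (auto simp: likelihood_appraisal_def)
  have uT: "?u (Atom TT) = 1" and uF: "?u (Atom FF) = 0"
    using tv la by (simp_all add: truth_valuation_def likelihood_appraisal_def)
  have nt: "non_triviality TT FF R"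
    unfolding non_triviality_def strict_def
    using rep'[OF bet_on_bets bet_on_bets] ub uT uF by (simp add: val_bet_on)
  have eq: "equivalence_axiom TT FF R"
    unfolding equivalence_axiom_def indiff_def
  proof (intro allI impI)
    fix a c assume "equivf TT FF c a"
    hence "t c = t a" using ex by (simp add: exact_tv_def)
    thus "R (bet_on c) (bet_on a) \<and> R (bet_on a) (bet_on c)"
      using rep'[OF bet_on_bets bet_on_bets] by (simp add: val_bet_on)
  qed
  show ?thesis using nt eq rep_oeu[OF rep'] by blast
qed

lemma mix_1[simp]: "mix 1 b b' = b" by (simp add: mix_def)
lemma mix_0[simp]: "mix 0 b b' = b'" by (simp add: mix_def)
lemma mix_same[simp]: "mix a b b = b" by (simp add: mix_def algebra_simps)
lemma mix_swap: "mix a b b' = mix (1 - a) b' b" by (simp add: mix_def algebra_simps fun_eq_iff)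

locale vnm =
  fixes R :: "'p pref" and TT FF :: 'p
  assumes nt: "non_triviality TT FF R" and oeu: "objective_expected_utility R"
    and eqa: "equivalence_axiom TT FF R"
begin

definition m :: "real \<Rightarrow> 'p form \<Rightarrow> real" where
  "m x = mix x (bet_on (Atom TT)) (bet_on (Atom FF))"

lemma compl: "b \<in> bets \<Longrightarrow> b' \<in> bets \<Longrightarrow> R b b' \<or> R b' b"
  using oeu by (simp add: objective_expected_utility_def complete_pref_def)

lemma trans: "b \<in> bets \<Longrightarrow> b' \<in> bets \<Longrightarrow> b'' \<in> bets \<Longrightarrow> R b b' \<Longrightarrow> R b' b'' \<Longrightarrow> R b b''"
  using oeu unfolding objective_expected_utility_def transitive_pref_def by blast

lemma indep: "b \<in> bets \<Longrightarrow> b' \<in> bets \<Longrightarrow> b'' \<in> bets \<Longrightarrow> 0 < a \<Longrightarrow> a < 1 \<Longrightarrow>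
   R b b' \<longleftrightarrow> R (mix a b b'') (mix a b' b'')"
proof -
  assume a: "b \<in> bets" "b' \<in> bets" "b'' \<in> bets" "0 < a" "a < 1"
  have "\<forall>b\<in>bets. \<forall>b'\<in>bets. \<forall>b''\<in>bets. \<forall>\<alpha>\<in>{0<..<1}. R b b' \<longleftrightarrow> R (mix \<alpha> b b'') (mix \<alpha> b' b'')"
    using oeu unfolding objective_expected_utility_def independence_pref_def by blast
  then show ?thesis using a by (meson greaterThanLessThan_iff)
qed

lemma arch: "b \<in> bets \<Longrightarrow> b' \<in> bets \<Longrightarrow> b'' \<in> bets \<Longrightarrow> strict R b b' \<Longrightarrow> strict R b' b'' \<Longrightarrow>
   \<exists>a\<in>{0<..<1}. \<exists>c\<in>{0<..<1}. strict R (mix a b b'') b' \<and> strict R b' (mix c b b'')"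
  using oeu unfolding objective_expected_utility_def archimedean_pref_def by blast

lemma refl: "b \<in> bets \<Longrightarrow> R b b" using compl by blast

lemma TF: "strict R (bet_on (Atom TT)) (bet_on (Atom FF))"
  using nt by (simp add: non_triviality_def)

lemma Tb: "R (bet_on (Atom TT)) (bet_on a)" and bF: "R (bet_on a) (bet_on (Atom FF))"
  using nt by (simp_all add: non_triviality_def)

lemma m1: "m 1 = bet_on (Atom TT)" by (simp add: m_def)
lemma m0: "m 0 = bet_on (Atom FF)" by (simp add: m_def)

lemma m_bets: "0 \<le> x \<Longrightarrow> x \<le> 1 \<Longrightarrow> m x \<in> bets"
  unfolding m_def by (intro bets_mix bet_on_bets)

lemma m_mix: "mix a (m x) (m y) = m (a * x + (1 - a) * y)"
  by (simp add: m_def mix_def fun_eq_iff algebra_simps)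

lemma indiff_trans: "b \<in> bets \<Longrightarrow> b' \<in> bets \<Longrightarrow> b'' \<in> bets \<Longrightarrow> indiff R b b' \<Longrightarrow> indiff R b' b'' \<Longrightarrow> indiff R b b''"
  unfolding indiff_def using trans by blast

lemma indiff_sym: "indiff R b b' \<Longrightarrow> indiff R b' b" unfolding indiff_def by blast

lemma strict_m0: assumes "0 < x" "x \<le> 1" shows "strict R (m x) (m 0)"
proof (cases "x = 1")
  case True thus ?thesis using TF m1 m0 by simp
next
  case False
  hence x: "0 < x" "x < 1" using assms by auto
  have "R (bet_on (Atom TT)) (bet_on (Atom FF)) \<longleftrightarrow> R (m x) (bet_on (Atom FF))"
    using indep[OF bet_on_bets[of "Atom TT"] bet_on_bets[of "Atom FF"] bet_on_bets[of "Atom FF"] x]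
    by (simp only: m_def mix_same)
  moreover have "R (bet_on (Atom FF)) (bet_on (Atom TT)) \<longleftrightarrow> R (bet_on (Atom FF)) (m x)"
    using indep[OF bet_on_bets[of "Atom FF"] bet_on_bets[of "Atom TT"] bet_on_bets[of "Atom FF"] x]
    by (simp only: m_def mix_same)
  ultimately show ?thesis using TF unfolding m0 strict_def by blast
qed

lemma strict_m: assumes "0 \<le> y" "y < x" "x \<le> 1" shows "strict R (m x) (m y)"
proof (cases "y = 0")
  case True thus ?thesis using strict_m0 assms by simp
next
  case False
  define g where "g = 1 - y / x"
  have g: "0 < g" "g < 1" using assms False by (auto simp: g_def field_simps)
  have mx: "m x \<in> bets" and m0b: "m 0 \<in> bets" using assms by (auto intro: m_bets)
  have e1: "mix g (m 0) (m x) = m y"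
    using assms by (simp add: m_mix g_def field_simps)
  have "R (m x) (m 0) \<longleftrightarrow> R (m x) (m y)"
    using indep[OF mx m0b mx g] e1 by simp
  moreover have "R (m 0) (m x) \<longleftrightarrow> R (m y) (m x)"
    using indep[OF m0b mx mx g] e1 by simp
  ultimately show ?thesis using strict_m0[of x] assms by (simp add: strict_def)
qed

lemma uniq:
  assumes "b \<in> bets" "0 \<le> x" "x \<le> 1" "0 \<le> y" "y \<le> 1" "indiff R b (m x)" "indiff R b (m y)"
  shows "x = y"
proof (rule ccontr)
  assume "x \<noteq> y"
  hence "x < y \<or> y < x" by auto
  moreover have mx: "m x \<in> bets" and my: "m y \<in> bets" using assms m_bets by auto
  moreover have "R (m x) (m y)" "R (m y) (m x)"
    using assms trans[OF mx assms(1) my] trans[OF my assms(1) mx]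
    by (auto simp: indiff_def)
  ultimately show False using strict_m assms by (auto simp: strict_def)
qed


lemma exists_m:
  assumes b: "b \<in> bets" and Tb: "R (bet_on (Atom TT)) b" and bF: "R b (bet_on (Atom FF))"
  shows "\<exists>x. 0 \<le> x \<and> x \<le> 1 \<and> indiff R b (m x)"
proof (cases "R b (m 1)")
  case True thus ?thesis using Tb m1 by (intro exI[of _ 1]) (simp add: indiff_def)
next
  case nT: False
  show ?thesis
  proof (cases "R (m 0) b")
    case True thus ?thesis using bF m0 by (intro exI[of _ 0]) (simp add: indiff_def)
  next
    case nF: False
    have T: "m 1 \<in> bets" and F: "m 0 \<in> bets" using m_bets by auto
    have sTb: "strict R (m 1) b" using nT Tb m1 by (simp add: strict_def)
    have sbF: "strict R b (m 0)" using nF bF m0 by (simp add: strict_def)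
    define S where "S = {x. 0 \<le> x \<and> x \<le> 1 \<and> R b (m x)}"
    have S0: "0 \<in> S" using bF m0 by (simp add: S_def)
    have bdd: "bdd_above S" unfolding S_def by (rule bdd_aboveI[of _ 1]) auto
    define s where "s = Sup S"
    have s0: "0 \<le> s" using cSup_upper[OF S0 bdd] by (simp add: s_def)
    have Sne: "S \<noteq> {}" using S0 by blast
    have s1: "s \<le> 1" unfolding s_def by (rule cSup_least[OF Sne]) (auto simp: S_def)
    have ub: "x \<le> s" if "x \<in> S" for x using cSup_upper[OF that bdd] by (simp add: s_def)
    have ms: "m s \<in> bets" using s0 s1 m_bets by auto
    have A: "R (m s) b"
    proof (rule ccontr)
      assume nA: "\<not> R (m s) b"
      hence sbs: "strict R b (m s)" using compl[OF b ms] by (auto simp: strict_def)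
      have "s \<noteq> 1" using nA sTb by (auto simp: strict_def)
      hence s1': "s < 1" using s1 by auto
      from arch[OF T b ms sTb sbs] obtain c where c: "c \<in> {0<..<1}" "strict R b (mix c (m 1) (m s))" by blast
      have eq: "mix c (m 1) (m s) = m (c + (1 - c) * s)" by (simp add: m_mix)
      have z: "0 \<le> c + (1 - c) * s" "c + (1 - c) * s \<le> 1" "s < c + (1 - c) * s"
      proof -
        have "0 \<le> (1 - c) * s" "(1 - c) * s \<le> (1 - c)" "c * s < c"
          using c s0 s1 s1' by (auto intro: mult_left_le simp: mult_less_cancel_left1)
        thus "0 \<le> c + (1 - c) * s" "c + (1 - c) * s \<le> 1" "s < c + (1 - c) * s"
          using c by (auto simp: algebra_simps)
      qed
      hence "c + (1 - c) * s \<in> S" using c eq by (simp add: S_def strict_def)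
      thus False using ub z by force
    qed
    have B: "R b (m s)"
    proof (rule ccontr)
      assume nB: "\<not> R b (m s)"
      hence ssb: "strict R (m s) b" using compl[OF b ms] by (auto simp: strict_def)
      have "s \<noteq> 0" using nB bF m0 by auto
      hence s0': "0 < s" using s0 by auto
      from arch[OF ms b F ssb sbF] obtain a where a: "a \<in> {0<..<1}" "strict R (mix a (m s) (m 0)) b" by blast
      have eq: "mix a (m s) (m 0) = m (a * s)" by (simp add: m_mix)
      have "a * s < s" using a s0' by simp
      hence "\<exists>x\<in>S. a * s < x" using less_cSup_iff[OF Sne bdd] by (auto simp: s_def)
      then obtain x where x: "x \<in> S" "a * s < x" by blast
      have as: "0 \<le> a * s" "a * s \<le> 1" using a s0 s1 \<open>a * s < s\<close> by auto
      have mx: "m x \<in> bets" and mas: "m (a * s) \<in> bets" using x as S_def m_bets by auto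
      have "strict R (m x) (m (a * s))" using strict_m[OF as(1) x(2)] x(1) by (simp add: S_def)
      moreover have "R b (m x)" using x(1) by (simp add: S_def)
      ultimately have "R b (m (a * s))" using trans[OF b mx mas] by (simp add: strict_def)
      thus False using a eq by (simp add: strict_def)
    qed
    show ?thesis using A B s0 s1 by (auto simp: indiff_def)
  qed
qed

lemma indiff_mix:
  assumes b1: "b1 \<in> bets" and b2: "b2 \<in> bets" and c1: "c1 \<in> bets" and c2: "c2 \<in> bets"
    and a: "0 \<le> a" "a \<le> 1" and i1: "indiff R b1 c1" and i2: "indiff R b2 c2"
  shows "indiff R (mix a b1 b2) (mix a c1 c2)"
proof -
  consider "a = 0" | "a = 1" | "0 < a \<and> a < 1" using a by force
  then show ?thesis
  proof cases
    case 1 thus ?thesis using i2 by simp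
  next
    case 2 thus ?thesis using i1 by simp
  next
    case 3
    hence a': "0 < a" "a < 1" "0 < 1 - a" "1 - a < 1" by auto
    have I1: "indiff R (mix a b1 b2) (mix a c1 b2)"
      using indep[OF b1 c1 b2 a'(1,2)] indep[OF c1 b1 b2 a'(1,2)] i1 unfolding indiff_def by blast
    have "indiff R (mix (1 - a) b2 c1) (mix (1 - a) c2 c1)"
      using indep[OF b2 c2 c1 a'(3,4)] indep[OF c2 b2 c1 a'(3,4)] i2 unfolding indiff_def by blast
    hence I2: "indiff R (mix a c1 b2) (mix a c1 c2)"
      using mix_swap[of a c1 b2] mix_swap[of a c1 c2] by simp
    show ?thesis
      using indiff_trans[OF _ _ _ I1 I2] b1 b2 c1 c2 a by (simp add: bets_mix)
  qed
qed

definition u :: "'p form \<Rightarrow> real" where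
  "u a = (SOME x. 0 \<le> x \<and> x \<le> 1 \<and> indiff R (bet_on a) (m x))"

lemma u_prop: "0 \<le> u a \<and> u a \<le> 1 \<and> indiff R (bet_on a) (m (u a))"
  unfolding u_def by (rule someI_ex) (rule exists_m[OF bet_on_bets Tb bF])

lemma u_unique: assumes "0 \<le> x" "x \<le> 1" "indiff R (bet_on a) (m x)" shows "u a = x"
  using uniq[OF bet_on_bets, of "u a" x a] u_prop[of a] assms by blast

lemma u_TT: "u (Atom TT) = 1"
  by (rule u_unique) (auto simp: m1 indiff_def intro: refl bet_on_bets)

lemma u_FF: "u (Atom FF) = 0"
  by (rule u_unique) (auto simp: m0 indiff_def intro: refl bet_on_bets)

lemma u_equiv: assumes "equivf TT FF c a" shows "u c = u a"
proof -
  have "indiff R (bet_on c) (bet_on a)" using eqa assms by (simp add: equivalence_axiom_def)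
  hence "indiff R (bet_on c) (m (u a))"
    using indiff_trans[OF bet_on_bets bet_on_bets m_bets] u_prop[of a] by blast
  thus ?thesis using u_unique u_prop[of a] by blast
qed

lemma u_bounds: "0 \<le> u a \<and> u a \<le> 1" using u_prop by blast

lemma bet_indiff_m_aux:
  assumes "finite S" shows "\<forall>b. is_bet b \<and> supp b \<subseteq> S \<longrightarrow> indiff R b (m (val u b))"
  using assms
proof (induction S rule: finite_induct)
  case empty
  { fix b :: "'p form \<Rightarrow> real" assume "is_bet b" "supp b \<subseteq> {}"
    hence False using betD(4)[of b] by simp }
  then show ?case by blast
next
  case (insert a S)
  show ?case
  proof (intro allI impI)
    fix b assume H: "is_bet b \<and> supp b \<subseteq> insert a S"
    hence bb: "is_bet b" and sb: "supp b \<subseteq> insert a S" by auto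
    have fin: "finite (insert a S)" using insert by simp
    have sum1: "b a + sum b S = 1" using sum_supp[OF fin sb] betD(4)[OF bb] insert(1,2) by simp
    have nn: "0 \<le> b c" for c using betD(2)[OF bb] .
    have zero_out: "b c = 0" if "c \<notin> insert a S" for c using sb that by (auto simp: supp_def)
    consider "b a = 0" | "b a = 1" | "0 < b a \<and> b a < 1" using nn[of a] betD(3)[OF bb, of a] by force
    then show "indiff R b (m (val u b))"
    proof cases
      case 1
      hence "supp b \<subseteq> S" using sb by (auto simp: supp_def)
      thus ?thesis using insert.IH bb by blast
    next
      case 2
      hence "sum b S = 0" using sum1 by simp
      hence z: "\<forall>c\<in>S. b c = 0" using sum_nonneg_eq_0_iff[OF insert(1)] nn by blast
      have "b = bet_on a"
      proof
        fix c show "b c = bet_on a c"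
          using 2 z zero_out[of c] by (cases "c = a"; cases "c \<in> S") (auto simp: bet_on_def)
      qed
      thus ?thesis using u_prop[of a] by (simp add: val_bet_on)
    next
      case 3
      define p where "p = b a"
      define b' where "b' = (\<lambda>c. if c = a then 0 else b c / (1 - p))"
      have p: "0 < p" "p < 1" using 3 p_def by auto
      have sb': "supp b' \<subseteq> S" using sb by (auto simp: supp_def b'_def)
      have "sum b' S = (\<Sum>c\<in>S. b c / (1 - p))"
        using insert(2) by (intro sum.cong) (auto simp: b'_def)
      also have "\<dots> = sum b S / (1 - p)" by (simp add: sum_divide_distrib)
      also have "sum b S = 1 - p" using sum1 p_def by simp
      finally have s': "sum b' S = 1" using p by simp
      have le: "b c \<le> 1 - p" if "c \<noteq> a" for c
      proof (cases "c \<in> S")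
        case True
        have "b c \<le> sum b S" using member_le_sum[OF True, of b] nn insert(1) by simp
        thus ?thesis using sum1 p_def by simp
      next
        case False thus ?thesis using zero_out[of c] that p by simp
      qed
      have bet': "is_bet b'" unfolding is_bet_def
      proof (intro conjI allI)
        show "finite (supp b')" using finite_subset[OF sb' insert(1)] .
        fix c
        show "0 \<le> b' c" using nn[of c] p by (simp add: b'_def)
        show "b' c \<le> 1" using le[of c] p by (simp add: b'_def)
      next
        show "sum b' (supp b') = 1" using sum_supp[OF insert(1) sb'] s' by simp
      qed
      have beq: "b = mix p (bet_on a) b'"
      proof
        fix c show "b c = mix p (bet_on a) b' c"
          using p by (cases "c = a") (auto simp: mix_def bet_on_def b'_def p_def)
      qed
      have IH: "indiff R b' (m (val u b'))" using insert.IH bet' sb' by blast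
      have vb: "val u b = p * u a + (1 - p) * val u b'"
        using val_mix[OF bet_on_bet bet'] beq by (simp add: val_bet_on)
      have vb': "0 \<le> val u b' \<and> val u b' \<le> 1" using val_bounds[OF bet'] u_bounds by blast
      have "indiff R (mix p (bet_on a) b') (mix p (m (u a)) (m (val u b')))"
        using indiff_mix[OF bet_on_bets _ m_bets m_bets _ _ _ IH] bet' p u_prop[of a] vb'
        by (simp add: bets_def)
      thus ?thesis using beq vb by (simp add: m_mix)
    qed
  qed
qed

lemma bet_indiff_m: "b \<in> bets \<Longrightarrow> indiff R b (m (val u b))"
  using bet_indiff_m_aux[of "supp b"] betD(1)[of b] by (auto simp: bets_def)

lemma val_u_bounds: "b \<in> bets \<Longrightarrow> 0 \<le> val u b \<and> val u b \<le> 1"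
  using val_bounds[of b u, OF _ u_bounds] by (simp add: bets_def)

lemma rep_u: assumes b: "b \<in> bets" and b': "b' \<in> bets"
  shows "R b b' \<longleftrightarrow> val u b' \<le> val u b"
proof -
  have i: "indiff R b (m (val u b))" "indiff R b' (m (val u b'))" using bet_indiff_m b b' by auto
  have mb: "m (val u b) \<in> bets" "m (val u b') \<in> bets" using val_u_bounds b b' m_bets by auto
  show ?thesis
  proof
    assume r: "R b b'"
    show "val u b' \<le> val u b"
    proof (rule ccontr)
      assume "\<not> val u b' \<le> val u b"
      hence "strict R (m (val u b')) (m (val u b))"
        using strict_m val_u_bounds b b' by auto
      moreover have "R (m (val u b)) (m (val u b'))"
        using trans[OF mb(1) b mb(2)] trans[OF b b' mb(2)] r i by (auto simp: indiff_def)
      ultimately show False by (simp add: strict_def)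
    qed
  next
    assume le: "val u b' \<le> val u b"
    have "R (m (val u b)) (m (val u b'))"
    proof (cases "val u b' = val u b")
      case True thus ?thesis using refl mb by simp
    next
      case False
      thus ?thesis using strict_m[of "val u b'" "val u b"] le val_u_bounds b b' by (auto simp: strict_def)
    qed
    thus "R b b'"
      using trans[OF b mb(1) b'] trans[OF mb(1) mb(2) b'] i by (auto simp: indiff_def)
  qed
qed

end


lemma sound_model:
  fixes R :: "'p pref" and TT FF :: 'p
  assumes "vnm R TT FF"
  shows "\<exists>(\<Omega>::('p \<Rightarrow> bool) set) t \<Sigma> lam. subjective_model TT FF \<Omega> t \<Sigma> lam
                 \<and> sound_tv TT FF \<Omega> t \<and> represents t lam R"
proof -
  interpret vnm R TT FF by fact
  define \<Omega> :: "('p \<Rightarrow> bool) set" where "\<Omega> = {v. admissible TT FF v}"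
  define t where "t a = {v\<in>\<Omega>. eval v a}" for a
  define lam where "lam A = u (SOME a. t a = A)" for A
  have teq: "equivf TT FF a c" if "t a = t c" for a c
    using that unfolding equivf_def entails_def t_def \<Omega>_def by (auto simp: set_eq_iff)
  have eqt: "t a = t c" if "equivf TT FF a c" for a c
    using that unfolding equivf_def entails_def t_def \<Omega>_def by auto
  have lamt: "lam (t a) = u a" for a
  proof -
    have "t (SOME c. t c = t a) = t a" by (rule someI[of _ a]) (rule HOL.refl)
    hence "equivf TT FF (SOME c. t c = t a) a" by (rule teq)
    thus ?thesis unfolding lam_def by (rule u_equiv)
  qed
  have tT: "t (Atom TT) = \<Omega>" and tF: "t (Atom FF) = {}"
    by (auto simp: t_def \<Omega>_def admissible_def)
  have tv: "truth_valuation TT FF \<Omega> t" using tT tF by (auto simp: truth_valuation_def t_def)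
  have la: "likelihood_appraisal \<Omega> (Pow \<Omega>) lam"
    unfolding likelihood_appraisal_def
    using algebra_Pow u_bounds lamt[of "Atom TT"] lamt[of "Atom FF"] tT tF u_TT u_FF
    by (simp add: lam_def)
  have sm: "subjective_model TT FF \<Omega> t (Pow \<Omega>) lam"
    using tv la by (auto simp: subjective_model_def t_def)
  have snd: "sound_tv TT FF \<Omega> t"
    unfolding sound_tv_def exact_tv_def monotone_tv_def symmetric_tv_def conj_distributive_tv_def
    using eqt by (auto simp: t_def \<Omega>_def entails_def)
  have "(\<lambda>a. lam (t a)) = u" using lamt by auto
  hence rep: "represents t lam R"
    unfolding represents_def value_of_val using rep_u by simp
  show ?thesis using sm snd rep by blast
qed

lemma exact_model:
  fixes R :: "'p pref" and TT FF :: 'p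
  assumes "vnm R TT FF"
  shows "\<exists>(\<Omega>::real set) t \<Sigma> lam. subjective_model TT FF \<Omega> t \<Sigma> lam \<and> exact_tv TT FF t
                 \<and> additive_la \<Sigma> lam \<and> represents t lam R"
proof -
  interpret vnm R TT FF by fact
  define \<Omega> :: "real set" where "\<Omega> = {0..<1}"
  define M where "M = restrict_space lborel \<Omega>"
  define t where "t a = {0..<u a}" for a
  have \<Omega>s: "\<Omega> \<inter> space lborel \<in> sets lborel" by (simp add: \<Omega>_def)
  have spM: "space M = \<Omega>" by (simp add: M_def space_restrict_space)
  have setsM: "A \<in> sets M \<longleftrightarrow> A \<subseteq> \<Omega> \<and> A \<in> sets lborel" for A
    unfolding M_def using sets_restrict_space_iff[OF \<Omega>s] .
  have measM: "measure M A = measure lborel A" if "A \<subseteq> \<Omega>" for A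
    unfolding M_def using measure_restrict_space[OF \<Omega>s that] .
  have emM: "emeasure M (space M) = emeasure lborel \<Omega>"
    unfolding spM unfolding M_def using emeasure_restrict_space[OF \<Omega>s order.refl] .
  have fm: "finite_measure M"
    by (rule finite_measureI) (simp add: emM \<Omega>_def)
  have alg: "algebra \<Omega> (sets M)"
    using sets.sigma_algebra_axioms[of M] spM by (simp add: sigma_algebra_iff)
  have MO: "measure M \<Omega> = 1" using measM[of \<Omega>] by (simp add: \<Omega>_def)
  have la: "likelihood_appraisal \<Omega> (sets M) (measure M)"
    unfolding likelihood_appraisal_def
    using alg MO finite_measure.bounded_measure[OF fm] spM by auto
  have tM: "t a \<in> sets M" for a using u_bounds[of a] by (auto simp: setsM t_def \<Omega>_def)
  have tv: "truth_valuation TT FF \<Omega> t"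
    using u_TT u_FF u_bounds by (auto simp: truth_valuation_def t_def \<Omega>_def)
  have sm: "subjective_model TT FF \<Omega> t (sets M) (measure M)"
    using tv la tM by (auto simp: subjective_model_def)
  have ex: "exact_tv TT FF t" using u_equiv by (auto simp: exact_tv_def t_def)
  have add: "additive_la (sets M) (measure M)"
    using finite_measure.finite_measure_Union[OF fm] by (auto simp: additive_la_def)
  have "(\<lambda>a. measure M (t a)) = u"
  proof
    fix a
    have "t a \<subseteq> \<Omega>" using u_bounds[of a] by (auto simp: t_def \<Omega>_def)
    thus "measure M (t a) = u a" using measM u_bounds[of a] by (simp add: t_def)
  qed
  hence rep: "represents t (measure M) R"
    unfolding represents_def value_of_val using rep_u by simp
  show ?thesis using sm ex add rep by blast
qed

lemma vnm_iff: "vnm R TT FF \<longleftrightarrow> non_triviality TT FF R \<and> objective_expected_utility R \<and> equivalence_axiom TT FF R"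
  by (simp add: vnm_def)

theorem proposition2:
  fixes R :: "'p pref" and TT FF :: 'p
  assumes "TT \<noteq> FF"
  shows
   "(non_triviality TT FF R \<and> objective_expected_utility R \<and> equivalence_axiom TT FF R
       \<longleftrightarrow> (\<exists>(\<Omega>::real set) t \<Sigma> lam. subjective_model TT FF \<Omega> t \<Sigma> lam \<and> exact_tv TT FF t
                 \<and> additive_la \<Sigma> lam \<and> represents t lam R))
  \<and> (non_triviality TT FF R \<and> objective_expected_utility R \<and> equivalence_axiom TT FF R
       \<longleftrightarrow> (\<exists>(\<Omega>::('p \<Rightarrow> bool) set) t \<Sigma> lam. subjective_model TT FF \<Omega> t \<Sigma> lam
                 \<and> sound_tv TT FF \<Omega> t \<and> represents t lam R))
  \<and> (\<forall>(\<Omega>::'w set) t \<Sigma> lam. subjective_model TT FF \<Omega> t \<Sigma> lam \<and> exact_tv TT FF t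
          \<and> additive_la \<Sigma> lam \<and> represents t lam R
        \<longrightarrow> non_triviality TT FF R \<and> objective_expected_utility R \<and> equivalence_axiom TT FF R)
  \<and> (\<forall>(\<Omega>::'w set) t \<Sigma> lam. subjective_model TT FF \<Omega> t \<Sigma> lam \<and> sound_tv TT FF \<Omega> t
          \<and> represents t lam R
        \<longrightarrow> non_triviality TT FF R \<and> objective_expected_utility R \<and> equivalence_axiom TT FF R)"
proof (intro conjI)
  show "non_triviality TT FF R \<and> objective_expected_utility R \<and> equivalence_axiom TT FF R
       \<longleftrightarrow> (\<exists>(\<Omega>::real set) t \<Sigma> lam. subjective_model TT FF \<Omega> t \<Sigma> lam \<and> exact_tv TT FF t
                 \<and> additive_la \<Sigma> lam \<and> represents t lam R)"
    using exact_model[of R TT FF] model_axioms[of TT FF _ _ _ _ R] vnm_iff[of R TT FF] by blast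
  show "non_triviality TT FF R \<and> objective_expected_utility R \<and> equivalence_axiom TT FF R
       \<longleftrightarrow> (\<exists>(\<Omega>::('p \<Rightarrow> bool) set) t \<Sigma> lam. subjective_model TT FF \<Omega> t \<Sigma> lam
                 \<and> sound_tv TT FF \<Omega> t \<and> represents t lam R)"
    using sound_model[of R TT FF] model_axioms[of TT FF _ _ _ _ R] vnm_iff[of R TT FF]
    unfolding sound_tv_def by blast
  show "\<forall>(\<Omega>::'w set) t \<Sigma> lam. subjective_model TT FF \<Omega> t \<Sigma> lam \<and> exact_tv TT FF t
          \<and> additive_la \<Sigma> lam \<and> represents t lam R
        \<longrightarrow> non_triviality TT FF R \<and> objective_expected_utility R \<and> equivalence_axiom TT FF R"
    by (intro allI impI, rule model_axioms) auto
  show "\<forall>(\<Omega>::'w set) t \<Sigma> lam. subjective_model TT FF \<Omega> t \<Sigma> lam \<and> sound_tv TT FF \<Omega> t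
          \<and> represents t lam R
        \<longrightarrow> non_triviality TT FF R \<and> objective_expected_utility R \<and> equivalence_axiom TT FF R"
    by (intro allI impI, rule model_axioms) (auto simp: sound_tv_def)
qed

end
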